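(* Let $(X,\|\cdot\|_X)\subset(Y,\|\cdot\|_Y)$ be normed spaces, $\theta\ge0$, $m\in\mathbb N_*$, $d\in\mathbb N_*$, $e\in\mathcal E$, and let $y\in Y$ satisfy: there exists $a>1$ such that $$\limsup_{R\to\infty}\frac{L_a(R)^{1+\frac{\theta}{2m}}}{R}\,\beta_e\big(L_a(R)^{d/2m}\big)\,d_Y(y,B_X(R))<\infty.$$ Then there exists a sequence $(x_n)_{n\ge1}\subset X$ such that $$\sum_{n=1}^\infty\Big(2^{n\theta}\beta_e(2^{nd})\|y-x_n\|_Y+2^{-2nm}\|x_n\|_X\Big)<\infty.$$
   Context: Young function: $e:\mathbb R\to\mathbb R_+$ symmetric, strictly convex, $e(0)=0$. $\mathcal E$: Young functions with $e(2s)\le\lambda e(s)$ for some $\lambda>0$ and $s\mapsto e(s)/s$ nondecreasing on $(0,\infty)$. $e^{-1}(a)=\sup\{c:e(c)\le a\}$, $\beta_e(R)=R/e^{-1}(R)$. $L_a(R)=R(\ln R)^a$. $B_X(R)=\{x\in X:\|x\|_X\le R\}$, $d_Y(y,A)=\inf_{x\in A}\|y-x\|_Y$. *)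

theory Defs
  imports "HOL-Analysis.Analysis"
begin

definition young_function :: "(real \<Rightarrow> real) \<Rightarrow> bool" where
  "young_function e \<longleftrightarrow>
     (\<forall>s. e (-s) = e s) \<and> (\<forall>s. 0 \<le> e s) \<and> e 0 = 0 \<and>
     (\<forall>x y t. x \<noteq> y \<and> 0 < t \<and> t < 1 \<longrightarrow>
        e (t * x + (1 - t) * y) < t * e x + (1 - t) * e y)"

definition class_E :: "(real \<Rightarrow> real) \<Rightarrow> bool" where
  "class_E e \<longleftrightarrow> young_function e \<and>
     (\<exists>lam>0. \<forall>s. e (2 * s) \<le> lam * e s) \<and>
     (\<forall>s t. 0 < s \<and> s \<le> t \<longrightarrow> e s / s \<le> e t / t)"

definition young_inv :: "(real \<Rightarrow> real) \<Rightarrow> real \<Rightarrow> real" where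
  "young_inv e a = Sup {c. e c \<le> a}"

definition beta_e :: "(real \<Rightarrow> real) \<Rightarrow> real \<Rightarrow> real" where
  "beta_e e R = R / young_inv e R"

definition L_fun :: "real \<Rightarrow> real \<Rightarrow> real" where
  "L_fun a R = R * (ln R) powr a"

text \<open>X is a linear subspace S of the normed space Y carrying its own norm nX.\<close>
definition normed_subspace :: "'y::real_normed_vector set \<Rightarrow> ('y \<Rightarrow> real) \<Rightarrow> bool" where
  "normed_subspace S nX \<longleftrightarrow> subspace S \<and>
     (\<forall>x\<in>S. 0 \<le> nX x) \<and> (\<forall>x\<in>S. nX x = 0 \<longleftrightarrow> x = 0) \<and>
     (\<forall>x\<in>S. \<forall>c. nX (c *\<^sub>R x) = \<bar>c\<bar> * nX x) \<and>
     (\<forall>x\<in>S. \<forall>z\<in>S. nX (x + z) \<le> nX x + nX z)"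

definition ballX :: "'y set \<Rightarrow> ('y \<Rightarrow> real) \<Rightarrow> real \<Rightarrow> 'y set" where
  "ballX S nX R = {x\<in>S. nX x \<le> R}"

definition distY :: "'y::real_normed_vector \<Rightarrow> 'y set \<Rightarrow> real" where
  "distY y A = Inf {norm (y - x) | x. x \<in> A}"

end

theory Submission imports Defs begin

lemma young_inv_nonneg:
  assumes "class_E e" "0 \<le> R"
  shows "0 \<le> young_inv e R"
proof -
  have yf: "young_function e" and mono: "\<forall>s t. 0 < s \<and> s \<le> t \<longrightarrow> e s / s \<le> e t / t"
    using assms(1) unfolding class_E_def by auto
  have e0: "e 0 = 0" and sym: "e (-1) = e 1" using yf unfolding young_function_def by auto
  have sc: "\<forall>x y t. x \<noteq> y \<and> 0 < t \<and> t < 1 \<longrightarrow>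
        e (t * x + (1 - t) * y) < t * e x + (1 - t) * e y"
    using yf unfolding young_function_def by auto
  have "e ((1/2) * 1 + (1 - 1/2) * (-1)) < (1/2) * e 1 + (1 - 1/2) * e (-1)"
    using sc[rule_format, of 1 "-1" "1/2"] by simp
  hence e1: "e 1 > 0" using e0 sym by simp
  have bd: "c \<le> max 1 (R / e 1)" if "e c \<le> R" for c
  proof (cases "c \<le> 1")
    case False
    hence "e 1 / 1 \<le> e c / c" using mono[rule_format, of 1 c] by auto
    hence "c * e 1 \<le> e c" using False by (simp add: field_simps)
    hence "c * e 1 \<le> R" using that by simp
    hence "c \<le> R / e 1" using e1 by (simp add: field_simps)
    thus ?thesis by simp
  qed simp
  have "bdd_above {c. e c \<le> R}" unfolding bdd_above_def using bd by blast
  moreover have "0 \<in> {c. e c \<le> R}" using e0 assms(2) by simp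
  ultimately show ?thesis unfolding young_inv_def by (meson cSup_upper)
qed

lemma beta_nonneg: "class_E e \<Longrightarrow> 0 \<le> R \<Longrightarrow> 0 \<le> beta_e e R"
  unfolding beta_e_def using young_inv_nonneg by simp

lemma ball_facts:
  assumes "normed_subspace S nX"
  shows "0 \<in> ballX S nX R \<or> R < 0" 
    "x \<in> ballX S nX R \<Longrightarrow> x \<in> S \<and> nX x \<le> R"
proof -
  have "0 \<in> S" using assms unfolding normed_subspace_def subspace_def by auto
  moreover have "nX 0 = 0" using assms unfolding normed_subspace_def
    by (metis calculation mult_zero_left abs_zero scaleR_zero_left)
  ultimately show "0 \<in> ballX S nX R \<or> R < 0" unfolding ballX_def by auto
  show "x \<in> ballX S nX R \<Longrightarrow> x \<in> S \<and> nX x \<le> R" unfolding ballX_def by auto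
qed

lemma distY_approx:
  assumes "normed_subspace S nX" "0 \<le> R" "0 < \<delta>"
  shows "0 \<le> distY y (ballX S nX R)"
    "\<exists>x\<in>ballX S nX R. norm (y - x) < distY y (ballX S nX R) + \<delta>"
proof -
  have ne: "{norm (y - x) | x. x \<in> ballX S nX R} \<noteq> {}" using ball_facts(1)[OF assms(1), of R] assms(2) by auto
  show "0 \<le> distY y (ballX S nX R)" unfolding distY_def using ne by (auto intro: cInf_greatest)
  have "\<exists>z\<in>{norm (y - x) | x. x \<in> ballX S nX R}. z < distY y (ballX S nX R) + \<delta>"
    unfolding distY_def apply (rule cInf_lessD[OF ne]) using assms(3) by simp
  thus "\<exists>x\<in>ballX S nX R. norm (y - x) < distY y (ballX S nX R) + \<delta>" by auto
qed

lemma exp1_pos: "exp 1 \<le> x \<Longrightarrow> 0 < (x::real)"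
  using exp_gt_zero[of 1] by linarith

lemma ln_ge1: "exp 1 \<le> (x::real) \<Longrightarrow> 1 \<le> ln x"
proof -
  assume h: "exp 1 \<le> x"
  hence "0 < x" by (rule exp1_pos)
  hence "ln (exp 1) \<le> ln x" using h by (subst ln_le_cancel_iff) auto
  thus ?thesis by simp
qed

lemma L_exists:
  assumes "a > 1" "T \<ge> exp 1"
  shows "\<exists>R\<ge>exp 1. L_fun a R = T"
proof -
  have "\<forall>x\<in>{exp 1..T}. ln x \<noteq> 0" using ln_ge1 by force
  moreover have "\<forall>x\<in>{exp 1..T}. x \<noteq> 0" using exp1_pos by force
  ultimately have c: "continuous_on {exp 1..T} (L_fun a)" unfolding L_fun_def
    by (intro continuous_on_mult continuous_on_id continuous_on_powr continuous_on_ln continuous_on_const) auto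
  have l1: "L_fun a (exp 1) \<le> T" using assms by (simp add: L_fun_def)
  have "ln T \<ge> 1" using assms(2) by (rule ln_ge1)
  hence "1 \<le> ln T powr a" using assms(1) by (intro ge_one_powr_ge_zero) auto
  hence l2: "T \<le> L_fun a T" unfolding L_fun_def using assms(2)
    using exp1_pos[OF assms(2)] mult_left_mono[of 1 "ln T powr a" T] by simp
  obtain R where "R \<in> {exp 1..T}" "L_fun a R = T"
    using IVT'[of "L_fun a" "exp 1" T T] c l1 l2 assms(2) by auto
  thus ?thesis by auto
qed

lemma L_mono:
  assumes "exp 1 \<le> R" "R \<le> R'" "a > 0"
  shows "L_fun a R \<le> L_fun a R'"
proof -
  have R0: "0 < R" using assms(1) by (rule exp1_pos)
  have "0 < ln R" using ln_ge1[OF assms(1)] by simp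
  hence "ln R powr a \<le> ln R' powr a" using assms
    using R0 by (intro powr_mono2) (auto intro!: ln_mono)  
  thus ?thesis unfolding L_fun_def using assms R0
    by (intro mult_mono) auto
qed


theorem mainTheorem16:
  fixes S :: "'y::real_normed_vector set" and nX :: "'y \<Rightarrow> real"
    and \<theta> :: real and m d :: nat and e :: "real \<Rightarrow> real" and y :: 'y
  assumes "normed_subspace S nX"
    and "\<theta> \<ge> 0" and "m \<ge> 1" and "d \<ge> 1"
    and "class_E e"
    and "\<exists>a>1. Limsup at_top (\<lambda>R. ereal (
            L_fun a R powr (1 + \<theta> / (2 * real m))
            / R * beta_e e (L_fun a R powr (real d / (2 * real m)))
            * distY y (ballX S nX R))) < \<infinity>"
  shows "\<exists>x :: nat \<Rightarrow> 'y. (\<forall>n\<ge>1. x n \<in> S) \<and>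
           summable (\<lambda>n. 2 powr (real (Suc n) * \<theta>) * beta_e e (2 powr (real (Suc n * d)))
                          * norm (y - x (Suc n))
                        + 2 powr (- real (2 * Suc n * m)) * nX (x (Suc n)))"
proof -
  obtain a where a1: "a > 1" and ls: "Limsup at_top (\<lambda>R. ereal (
            L_fun a R powr (1 + \<theta> / (2 * real m))
            / R * beta_e e (L_fun a R powr (real d / (2 * real m)))
            * distY y (ballX S nX R))) < \<infinity>" using assms(6) by blast
  define f where "f R = L_fun a R powr (1 + \<theta> / (2 * real m))
            / R * beta_e e (L_fun a R powr (real d / (2 * real m)))
            * distY y (ballX S nX R)" for R
  have ls': "Limsup at_top (\<lambda>R. ereal (f R)) < \<infinity>" using ls unfolding f_def .
  obtain C where C: "Limsup at_top (\<lambda>R. ereal (f R)) < ereal C"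
    using ereal_dense2[OF ls'] by blast
  have "eventually (\<lambda>R. ereal (f R) < ereal C) at_top" using Limsup_lessD[OF C] .
  then obtain R0 where R0: "\<And>R. R \<ge> R0 \<Longrightarrow> f R < C"
    by (auto simp: eventually_at_top_linorder)
  define R1 where "R1 = max R0 (exp 1)"
  define T where "T k = 2 powr real (2*k*m)" for k :: nat
  have Tpos: "T k > 0" for k unfolding T_def by simp
  have T2k: "T k \<ge> 2 ^ k" for k
  proof -
    have "T k = 2 ^ (2*k*m)" unfolding T_def by (subst powr_realpow) auto
    moreover have "k \<le> 2*k*m" using assms(3) by simp
    ultimately show ?thesis by (simp add: power_increasing)
  qed
  have Tge: "T k \<ge> exp 1" if "k \<ge> 1" for k
  proof -
    have "T k = 2 ^ (2*k*m)" unfolding T_def by (subst powr_realpow) auto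
    moreover have "2 \<le> 2*k*m" using assms(3) that by simp
    ultimately have "T k \<ge> 2^2" using power_increasing[of 2 "2*k*m" "2::real"] by simp
    thus ?thesis using exp_le by simp
  qed
  have "\<forall>k. \<exists>r. k \<ge> 1 \<longrightarrow> exp 1 \<le> r \<and> L_fun a r = T k"
    using L_exists[OF a1 Tge] by blast
  then obtain R where R: "\<And>k. k \<ge> 1 \<Longrightarrow> exp 1 \<le> R k \<and> L_fun a (R k) = T k" by metis
  define w where "w k = 2 powr (real k * \<theta>) * beta_e e (2 powr real (k*d))" for k :: nat
  have w0: "w k \<ge> 0" for k unfolding w_def using beta_nonneg[OF assms(5)] by simp
  define D where "D k = distY y (ballX S nX (R k))" for k
  have "\<forall>k. \<exists>z. k \<ge> 1 \<longrightarrow> z \<in> ballX S nX (R k) \<and> norm (y - z) < D k + 2 powr (-real k) / (w k + 1)"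
  proof
    fix k :: nat
    show "\<exists>z. k \<ge> 1 \<longrightarrow> z \<in> ballX S nX (R k) \<and> norm (y - z) < D k + 2 powr (-real k) / (w k + 1)"
    proof (cases "k \<ge> 1")
      case True
      have "0 \<le> R k" using exp1_pos conjunct1[OF R[OF True]] by force
      moreover have "0 < 2 powr (-real k) / (w k + 1)" using w0[of k] by (simp add: add_nonneg_pos)
      ultimately show ?thesis using distY_approx(2)[OF assms(1)] unfolding D_def by blast
    qed simp
  qed
  then obtain x where x: "\<And>k. k \<ge> 1 \<Longrightarrow> x k \<in> ballX S nX (R k) \<and> norm (y - x k) < D k + 2 powr (-real k) / (w k + 1)"
    by metis
  have xS: "x k \<in> S" and xn: "nX (x k) \<le> R k" if "k \<ge> 1" for k
    using ball_facts(2)[OF assms(1) conjunct1[OF x[OF that]]] by auto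
  define c0 where "c0 = ln 2 / (1 + a)"
  define C' where "C' = \<bar>C\<bar> + 1"
  define g where "g k = C' * c0 powr (-a) * real k powr (-a) + 2 powr (-real k)" for k :: nat
  have bound: "norm (w k * norm (y - x k) + 2 powr (- real (2 * k * m)) * nX (x k)) \<le> g k"
    if k1: "k \<ge> 1" and kL: "real k \<ge> L_fun a R1" for k
  proof -
    have Rk: "exp 1 \<le> R k" and LR: "L_fun a (R k) = T k" using R[OF k1] by auto
    have Rk0: "0 < R k" using Rk by (rule exp1_pos)
    have lnR: "1 \<le> ln (R k)" using ln_ge1[OF Rk] .
    define l where "l = ln (R k) powr a"
    have l1: "l \<ge> 1" unfolding l_def using lnR a1 by (intro ge_one_powr_ge_zero) auto
    have Tl: "T k = R k * l" using LR unfolding L_fun_def l_def by simp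
    have RR1: "R k \<ge> R1"
    proof (rule ccontr)
      assume "\<not> R k \<ge> R1"
      hence "L_fun a (R k) \<le> L_fun a R1" using L_mono[OF Rk _] a1 by simp
      hence "T k \<le> real k" using LR kL by simp
      moreover have "k < 2 ^ k" by (rule less_exp)
      hence "real k < 2 ^ k" by (metis of_nat_less_iff of_nat_numeral of_nat_power)
      ultimately show False using T2k[of k] by simp
    qed
    hence fC: "f (R k) < C" using R0 unfolding R1_def by simp
    have p1: "T k powr (1 + \<theta> / (2 * real m)) = T k * 2 powr (real k * \<theta>)"
    proof -
      have "T k powr (1 + \<theta> / (2 * real m)) = T k * T k powr (\<theta> / (2 * real m))"
        using Tpos[of k] by (simp add: powr_add)
      also have "T k powr (\<theta> / (2 * real m)) = 2 powr (real k * \<theta>)"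
        unfolding T_def using assms(3) by (simp add: powr_powr)
      finally show ?thesis .
    qed
    have p2: "T k powr (real d / (2 * real m)) = 2 powr real (k*d)"
      unfolding T_def using assms(3) by (simp add: powr_powr)
    have fR: "f (R k) = l * (w k * D k)"
    proof -
      have "f (R k) = T k * 2 powr (real k * \<theta>) / R k * beta_e e (2 powr real (k*d)) * D k"
        unfolding f_def LR p1 p2 D_def by (rule refl)
      also have "T k * 2 powr (real k * \<theta>) / R k = l * 2 powr (real k * \<theta>)"
        unfolding Tl using Rk0 by simp
      finally show ?thesis unfolding w_def by (simp only: mult.assoc)
    qed
    have D0: "D k \<ge> 0" unfolding D_def using distY_approx(1)[OF assms(1), of "R k" 1] Rk0 by simp
    have "l * (w k * D k) < C" using fC unfolding fR .
    hence "w k * D k * l \<le> C" by (simp add: mult.commute)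
    hence wD: "w k * D k \<le> C / l"
      using l1 by (subst pos_le_divide_eq) auto
    have xk: "norm (y - x k) < D k + 2 powr (-real k) / (w k + 1)" using x[OF k1] by simp
    have "w k * norm (y - x k) \<le> w k * (D k + 2 powr (-real k) / (w k + 1))"
      using xk w0[of k] by (intro mult_left_mono) auto
    also have "\<dots> = w k * D k + 2 powr (-real k) * (w k / (w k + 1))"
      by (simp add: distrib_left)
    also have "\<dots> \<le> w k * D k + 2 powr (-real k)"
      using w0[of k] by (intro add_left_mono mult_left_le) auto
    finally have t1: "w k * norm (y - x k) \<le> C / l + 2 powr (-real k)" using wD by simp
    have Tinv: "2 powr (- real (2 * k * m)) = 1 / T k" unfolding T_def by (simp add: powr_minus divide_inverse)
    have nX0: "nX (x k) \<ge> 0" using assms(1) xS[OF k1] unfolding normed_subspace_def by auto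
    have "nX (x k) / (R k * l) \<le> R k / (R k * l)"
      using xn[OF k1] Rk0 l1 by (intro divide_right_mono) auto
    also have "\<dots> = 1 / l" using Rk0 by simp
    finally have t2: "2 powr (- real (2 * k * m)) * nX (x k) \<le> 1 / l"
      unfolding Tinv Tl by simp
    have tpos: "0 \<le> w k * norm (y - x k) + 2 powr (- real (2 * k * m)) * nX (x k)"
      using w0[of k] nX0 by simp
    have c0l: "(c0 * real k) powr a \<le> l"
    proof -
      have "ln (R k) \<le> R k" using Rk0 ln_le_minus_one[OF Rk0] by simp
      hence "l \<le> R k powr a" unfolding l_def using lnR a1 by (intro powr_mono2) auto
      hence "T k \<le> R k powr (1 + a)" unfolding Tl using Rk0 by (simp add: powr_add)
      hence "ln (T k) \<le> ln (R k powr (1 + a))" using Tpos[of k] Rk0 by (subst ln_le_cancel_iff) auto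
      hence "ln (T k) \<le> (1 + a) * ln (R k)" using Rk0 ln_powr[of "R k" "1 + a"] by simp
      moreover have "ln (T k) = real (2*k*m) * ln 2" unfolding T_def by (simp add: ln_powr)
      moreover have "k \<le> 2*k*m" using assms(3) by simp
      hence "real k \<le> real (2*k*m)" by (rule of_nat_mono)
      hence "real k * ln 2 \<le> real (2*k*m) * ln 2" by (rule mult_right_mono) simp
      ultimately have "real k * ln 2 \<le> (1 + a) * ln (R k)" by linarith
      hence "c0 * real k \<le> ln (R k)" unfolding c0_def using a1 by (simp add: field_simps)
      moreover have "0 \<le> c0 * real k" unfolding c0_def using a1 by simp
      ultimately show ?thesis unfolding l_def using a1 by (intro powr_mono2) auto
    qed
    have c0p: "c0 > 0" unfolding c0_def using a1 by simp
    have cpos: "0 < (c0 * real k) powr a" using c0p k1 by simp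
    have "C / l + 1 / l = (C + 1) / l" by (simp add: add_divide_distrib)
    also have "\<dots> \<le> C' / l" unfolding C'_def using l1 by (intro divide_right_mono) auto
    also have "\<dots> \<le> C' / (c0 * real k) powr a"
      using c0l cpos l1 unfolding C'_def by (intro divide_left_mono) auto
    also have "\<dots> = C' * c0 powr (-a) * real k powr (-a)"
      using c0p k1 by (simp add: powr_mult powr_minus divide_inverse)
    finally have cc: "C / l + 1 / l \<le> C' * c0 powr (-a) * real k powr (-a)" .
    show ?thesis using tpos t1 t2 cc unfolding g_def by simp
  qed
  have sg: "summable g"
  proof -
    have "summable (\<lambda>k. real k powr (-a))" using a1 summable_real_powr_iff by simp
    hence s1: "summable (\<lambda>k. C' * c0 powr (-a) * real k powr (-a))" by (rule summable_mult)
    have "(\<lambda>k::nat. 2 powr (-real k)) = (\<lambda>k. (1/2::real)^k)"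
      by (simp add: powr_minus powr_realpow power_one_over inverse_eq_divide)
    moreover have "summable (\<lambda>k::nat. (1/2::real)^k)" by (rule summable_geometric) simp
    ultimately have "summable (\<lambda>k::nat. 2 powr (-real k))" by (simp only:)
    with s1 show ?thesis unfolding g_def by (rule summable_add)
  qed
  hence sg': "summable (\<lambda>n. g (Suc n))" by (subst summable_Suc_iff)
  show ?thesis
  proof (intro exI conjI allI impI)
    fix n :: nat assume "n \<ge> 1" thus "x n \<in> S" by (rule xS)
  next
    show "summable (\<lambda>n. 2 powr (real (Suc n) * \<theta>) * beta_e e (2 powr (real (Suc n * d)))
                          * norm (y - x (Suc n))
                        + 2 powr (- real (2 * Suc n * m)) * nX (x (Suc n)))"
    proof (rule summable_comparison_test'[OF sg', where N="nat \<lceil>L_fun a R1\<rceil>"])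
      fix n :: nat assume "nat \<lceil>L_fun a R1\<rceil> \<le> n"
      hence "real (nat \<lceil>L_fun a R1\<rceil>) \<le> real n" by (rule of_nat_mono)
      hence "L_fun a R1 \<le> real (Suc n)" using real_nat_ceiling_ge[of "L_fun a R1"] by simp
      hence b: "norm (w (Suc n) * norm (y - x (Suc n)) + 2 powr (- real (2 * Suc n * m)) * nX (x (Suc n))) \<le> g (Suc n)"
        by (intro bound) simp_all
      show "norm (2 powr (real (Suc n) * \<theta>) * beta_e e (2 powr (real (Suc n * d)))
                          * norm (y - x (Suc n))
                        + 2 powr (- real (2 * Suc n * m)) * nX (x (Suc n))) \<le> g (Suc n)"
        using b unfolding w_def .
    qed
  qed
qed

end
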